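(* Let $l\ge2$, $d\ge2$. For $u\in\sigma^\vee\cap M$ with $\deg(u)=N(l-1)d$ one has $0\le\varphi(u)\le(l-1)N$. Moreover there is a constant $C(l,d)$ depending only on $l,d$ such that for all sufficiently large $N$ and all integers $0\le m\le(l-1)N$, $$\Big|\#\{u\in\sigma^\vee\cap M:\varphi(u)=m,\ \deg(u)=Nd(l-1)\}-d^{ld-1}\frac{(N(l-1)-m)^{l(d-1)-1}}{(l(d-1)-1)!}\Big|\le C(l,d)N^{l(d-1)-2}.$$
   Context: $\mathbf{Z}^{ld}$ has basis $e_{ij}$ ($1\le i\le l,1\le j\le d$), $\epsilon_i=\sum_je_{ij}$, $M=\mathbf{Z}^{ld}/\langle\epsilon_1-\epsilon_2,\dots,\epsilon_1-\epsilon_l\rangle$ with images $e_{ij}$, $\epsilon$; $\sigma^\vee\subset M_\mathbf{R}$ is the cone generated by the $e_{ij}$. $\deg\colon M\to\mathbf{Z}$ is the homomorphism with $\deg(e_{ij})=1$. $\varphi\colon M_\mathbf{R}\to\mathbf{R}$ is defined by $\varphi(u)=\sum_{i=1}^l\min_{1\le j\le d}a_{ij}$ for any representative $u=\sum a_{ij}e_{ij}$ (this is independent of the representative). *)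

theory Defs
  imports Complex_Main
begin

definition Zld :: "nat \<Rightarrow> nat \<Rightarrow> (nat \<Rightarrow> nat \<Rightarrow> int) set" where
  "Zld l d = {a. \<forall>i j. (l \<le> i \<or> d \<le> j) \<longrightarrow> a i j = 0}"

text \<open>a ~ b iff a - b lies in the span of eps_1 - eps_i, i.e. a - b = sum_i c_i eps_i with sum_i c_i = 0.\<close>
definition Mrel :: "nat \<Rightarrow> nat \<Rightarrow> ((nat \<Rightarrow> nat \<Rightarrow> int) \<times> (nat \<Rightarrow> nat \<Rightarrow> int)) set" where
  "Mrel l d = {(a, b). a \<in> Zld l d \<and> b \<in> Zld l d \<and>
     (\<exists>c :: nat \<Rightarrow> int. (\<Sum>i<l. c i) = 0 \<and> (\<forall>i<l. \<forall>j<d. a i j - b i j = c i))}"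

definition Mlat :: "nat \<Rightarrow> nat \<Rightarrow> (nat \<Rightarrow> nat \<Rightarrow> int) set set" where
  "Mlat l d = Zld l d // Mrel l d"

definition rep :: "(nat \<Rightarrow> nat \<Rightarrow> int) set \<Rightarrow> (nat \<Rightarrow> nat \<Rightarrow> int)" where
  "rep u = (SOME a. a \<in> u)"

text \<open>The image of an integer vector a in M_R lies in the cone generated by the e_ij
  iff some real representative a + sum_i c_i eps_i (sum_i c_i = 0) has all coordinates \<ge> 0.\<close>
definition in_cone :: "nat \<Rightarrow> nat \<Rightarrow> (nat \<Rightarrow> nat \<Rightarrow> int) \<Rightarrow> bool" where
  "in_cone l d a \<longleftrightarrow> (\<exists>c :: nat \<Rightarrow> real. (\<Sum>i<l. c i) = 0 \<and>
      (\<forall>i<l. \<forall>j<d. real_of_int (a i j) + c i \<ge> 0))"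

definition sigma_dual_M :: "nat \<Rightarrow> nat \<Rightarrow> (nat \<Rightarrow> nat \<Rightarrow> int) set set" where
  "sigma_dual_M l d = {u \<in> Mlat l d. \<exists>a\<in>u. in_cone l d a}"

definition degM :: "nat \<Rightarrow> nat \<Rightarrow> (nat \<Rightarrow> nat \<Rightarrow> int) set \<Rightarrow> int" where
  "degM l d u = (\<Sum>i<l. \<Sum>j<d. rep u i j)"

definition phiM :: "nat \<Rightarrow> nat \<Rightarrow> (nat \<Rightarrow> nat \<Rightarrow> int) set \<Rightarrow> int" where
  "phiM l d u = (\<Sum>i<l. Min ((\<lambda>j. rep u i j) ` {..<d}))"

end

theory Submission
  imports Defs "HOL-Library.FuncSet"
begin


definition cmp :: "'a set \<Rightarrow> nat \<Rightarrow> ('a \<Rightarrow> nat) set" where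
  "cmp P K = {f. (\<forall>x. x \<notin> P \<longrightarrow> f x = 0) \<and> sum f P = K}"

lemma cmp_finite:
  assumes "finite P" shows "finite (cmp P K)"
proof -
  have "cmp P K \<subseteq> (\<lambda>g x. if x \<in> P then g x else 0) ` (PiE P (\<lambda>_. {..K}))"
  proof
    fix f assume f: "f \<in> cmp P K"
    have le: "f x \<le> K" if "x \<in> P" for x
      using f that assms member_le_sum[of x P f] unfolding cmp_def by auto
    let ?g = "restrict f P"
    have "?g \<in> PiE P (\<lambda>_. {..K})" using le by auto
    moreover have "f = (\<lambda>x. if x \<in> P then ?g x else 0)"
      using f unfolding cmp_def by auto
    ultimately show "f \<in> (\<lambda>g x. if x \<in> P then g x else 0) ` (PiE P (\<lambda>_. {..K}))" by blast
  qed
  moreover have "finite (PiE P (\<lambda>_. {..K}))" using assms by (simp add: finite_PiE)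
  ultimately show ?thesis using finite_subset by blast
qed

lemma cmp_empty: "cmp {} K = (if K = 0 then {\<lambda>_. 0} else {})"
  unfolding cmp_def by auto

lemma cmp_insert_bij:
  assumes "x \<notin> P" "finite P"
  shows "bij_betw (\<lambda>f. (f x, f(x:=0))) (cmp (insert x P) K) (Sigma {..K} (\<lambda>t. cmp P (K - t)))"
proof (rule bij_betw_byWitness[where f' = "\<lambda>(t,g). g(x:=t)"])
  show "\<forall>a\<in>cmp (insert x P) K. (\<lambda>(t, g). g(x := t)) (a x, a(x := 0)) = a" by auto
  show "\<forall>a'\<in>Sigma {..K} (\<lambda>t. cmp P (K - t)). (\<lambda>f. (f x, f(x := 0))) ((\<lambda>(t, g). g(x := t)) a') = a'"
    using assms unfolding cmp_def by auto
  show "(\<lambda>f. (f x, f(x := 0))) ` cmp (insert x P) K \<subseteq> Sigma {..K} (\<lambda>t. cmp P (K - t))"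
  proof (rule image_subsetI)
    fix f assume f: "f \<in> cmp (insert x P) K"
    have s: "f x + sum f P = K" using f assms unfolding cmp_def by auto
    have "sum (f(x:=0)) P = sum f P" using assms by (intro sum.cong) auto
    then show "(f x, f(x:=0)) \<in> Sigma {..K} (\<lambda>t. cmp P (K - t))" using s f unfolding cmp_def by auto
  qed
  show "(\<lambda>(t, g). g(x := t)) ` Sigma {..K} (\<lambda>t. cmp P (K - t)) \<subseteq> cmp (insert x P) K"
  proof (rule image_subsetI)
    fix p assume "p \<in> Sigma {..K} (\<lambda>t. cmp P (K - t))"
    then obtain t g where p: "p = (t, g)" and t: "t \<in> {..K}" and g: "g \<in> cmp P (K - t)" by blast
    have "sum (g(x:=t)) P = sum g P" using assms by (intro sum.cong) auto
    then have "sum (g(x:=t)) (insert x P) = t + sum g P" using assms by simp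
    moreover have "sum g P = K - t" using g unfolding cmp_def by auto
    ultimately have "sum (g(x:=t)) (insert x P) = K" using t by simp
    then have "g(x:=t) \<in> cmp (insert x P) K" using g unfolding cmp_def by auto
    then show "(\<lambda>(t, g). g(x := t)) p \<in> cmp (insert x P) K" using p by simp
  qed
qed

lemma cmp_card:
  assumes "finite P" "P \<noteq> {}"
  shows "card (cmp P K) = (K + card P - 1) choose K"
  using assms
proof (induction P arbitrary: K rule: finite_induct)
  case empty then show ?case by simp
next
  case (insert x P)
  have "card (cmp (insert x P) K) = card (Sigma {..K} (\<lambda>t. cmp P (K - t)))"
    using bij_betw_same_card[OF cmp_insert_bij[OF insert(2,1)]] .
  also have "\<dots> = (\<Sum>t\<le>K. card (cmp P (K - t)))"
    using insert(1) by (simp add: card_SigmaI cmp_finite)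
  also have "\<dots> = (K + card (insert x P) - 1) choose K"
  proof (cases "P = {}")
    case True
    have "(\<Sum>t\<le>K. card (cmp P (K - t))) = (\<Sum>t\<le>K. if t = K then 1 else 0)"
      using True by (intro sum.cong) (auto simp: cmp_empty)
    also have "\<dots> = 1" by simp
    finally show ?thesis using True by simp
  next
    case False
    have "(\<Sum>t\<le>K. card (cmp P (K - t))) = (\<Sum>t\<le>K. (card P - 1 + (K - t)) choose (K - t))"
      using insert.IH[OF False] insert(1) False by (intro sum.cong) (auto simp: card_gt_0_iff Suc_le_eq add.commute)
    also have "\<dots> = (\<Sum>t\<le>K. (card P - 1 + t) choose t)"
      by (rule sum.reindex_bij_witness[where i="\<lambda>t. K - t" and j="\<lambda>t. K - t"]) auto
    also have "\<dots> = Suc (card P - 1 + K) choose K" by (rule sum_choose_lower)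
    moreover have "Suc (card P - 1 + K) = K + card (insert x P) - 1"
      using False insert(1,2) by (simp add: card_gt_0_iff Suc_diff_le)
    ultimately show ?thesis by simp
  qed
  finally show ?case .
qed




lemma bin_low: "real ((K-1) choose e) * fact e \<le> real K ^ e"
proof -
  have "((K-1) choose e) * fact e \<le> (K-1)^e" by (rule binomial_fact_pow)
  also have "\<dots> \<le> K^e" by (rule power_mono) auto
  finally have "((K-1) choose e) * fact e \<le> K^e" .
  then show ?thesis by (metis of_nat_fact of_nat_mult of_nat_power of_nat_le_iff)
qed

lemma bin_up_nat: "K^e \<le> ((K+e) choose e) * fact e"
proof (induction e)
  case 0 then show ?case by simp
next
  case (Suc e)
  have fs: "fact (Suc e) = Suc e * (fact e::nat)" by simp
  have eq: "Suc (K+e) * ((K+e) choose e) = (Suc (K+e) choose Suc e) * Suc e"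
    by (rule Suc_times_binomial_eq)
  have "K^Suc e = K * K^e" by simp
  also have "\<dots> \<le> Suc (K+e) * (((K+e) choose e) * fact e)"
    using Suc.IH by (intro mult_mono) auto
  also have "\<dots> = (Suc (K+e) choose Suc e) * Suc e * fact e" using eq by (metis mult.assoc)
  also have "(Suc (K+e) choose Suc e) * Suc e * fact e = ((K + Suc e) choose Suc e) * fact (Suc e)"
    using fs by (simp only: add_Suc_right mult.assoc)
  finally show ?case .
qed

lemma bin_up: "real K ^ e \<le> real ((K+e) choose e) * fact e"
proof -
  show ?thesis using bin_up_nat[of K e] by (metis of_nat_fact of_nat_mult of_nat_power of_nat_le_iff)
qed

lemma bin_diff:
  assumes "e \<ge> 1"
  shows "(K+e) choose e \<le> ((K-1) choose e) + (e+1)*(K+e)^(e-1)"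
proof -
  have "i \<le> e+1 \<Longrightarrow> (K+i-1) choose e \<le> ((K-1) choose e) + i*(K+e)^(e-1)" for i
  proof (induction i)
    case 0 then show ?case by simp
  next
    case (Suc i)
    have IH: "(K+i-1) choose e \<le> ((K-1) choose e) + i*(K+e)^(e-1)" using Suc by simp
    show ?case
    proof (cases "K + i = 0")
      case True
      then have h: "(K + Suc i - 1) choose e = (K-1) choose e" by simp
      show ?thesis using le_add1[of "((K-1) choose e)" "Suc i * (K+e)^(e-1)"] h by linarith
    next
      case False
      have red: "(K+i) choose e = ((K+i-1) choose (e-1)) + ((K+i-1) choose e)"
        using False assms by (intro choose_reduce_nat) auto
      have "(K+i-1) choose (e-1) \<le> (K+e)^(e-1)"
      proof (cases "e - 1 \<le> K+i-1")
        case True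
        then have "(K+i-1) choose (e-1) \<le> (K+i-1)^(e-1)" by (rule binomial_le_pow)
        also have "\<dots> \<le> (K+e)^(e-1)" using Suc.prems by (intro power_mono) auto
        finally show ?thesis .
      next
        case False then show ?thesis by (simp add: binomial_eq_0)
      qed
      then show ?thesis using red IH by simp
    qed
  qed
  from this[of "e+1"] show ?thesis by simp
qed




definition GG :: "nat \<Rightarrow> nat \<Rightarrow> (nat \<times> nat) set" where
  "GG l d = {..<l} \<times> {..<d}"

definition Zp :: "nat \<Rightarrow> (nat \<Rightarrow> nat) \<Rightarrow> (nat \<times> nat) set" where
  "Zp l z = (\<lambda>i. (i, z i)) ` {..<l}"

definition BB :: "nat \<Rightarrow> nat \<Rightarrow> nat \<Rightarrow> (nat \<times> nat \<Rightarrow> nat) set" where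
  "BB l d K = {b. (\<forall>x. x \<notin> GG l d \<longrightarrow> b x = 0) \<and> (\<forall>i<l. \<exists>j<d. b (i,j) = 0) \<and> sum b (GG l d) = K}"

definition ZZ :: "nat \<Rightarrow> nat \<Rightarrow> (nat \<Rightarrow> nat) set" where
  "ZZ l d = PiE {..<l} (\<lambda>_. {..<d})"

lemma GG_finite[simp]: "finite (GG l d)" unfolding GG_def by simp

lemma card_ZZ: "card (ZZ l d) = d ^ l"
  unfolding ZZ_def by (simp add: card_PiE)

lemma finite_ZZ: "finite (ZZ l d)"
  unfolding ZZ_def by (simp add: finite_PiE)

lemma Zp_sub: "z \<in> ZZ l d \<Longrightarrow> Zp l z \<subseteq> GG l d"
  unfolding Zp_def GG_def ZZ_def by auto

lemma card_Pz:
  assumes "z \<in> ZZ l d"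
  shows "card (GG l d - Zp l z) = l * (d - 1)"
proof -
  have "card (Zp l z) = l" unfolding Zp_def
    by (subst card_image) (auto simp: inj_on_def)
  moreover have "card (GG l d) = l * d" unfolding GG_def by (simp add: card_cartesian_product)
  moreover have "finite (Zp l z)" unfolding Zp_def by simp
  ultimately show ?thesis using Zp_sub[OF assms] by (simp add: card_Diff_subset diff_mult_distrib2)
qed

lemma BB_sub_cmp: "BB l d K \<subseteq> cmp (GG l d) K"
proof
  fix b assume "b \<in> BB l d K"
  then have "(\<forall>x. x \<notin> GG l d \<longrightarrow> b x = 0) \<and> sum b (GG l d) = K" unfolding BB_def by simp
  then show "b \<in> cmp (GG l d) K" unfolding cmp_def by simp
qed

lemma BB_finite: "finite (BB l d K)"
  by (rule finite_subset[OF BB_sub_cmp cmp_finite[OF GG_finite]])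

lemma BB_sub_union: "BB l d K \<subseteq> (\<Union>z\<in>ZZ l d. cmp (GG l d - Zp l z) K)"
proof
  fix b assume b: "b \<in> BB l d K"
  define z where "z = (\<lambda>i. if i < l then (SOME j. j < d \<and> b (i,j) = 0) else undefined)"
  have zi: "z i < d \<and> b (i, z i) = 0" if il: "i < l" for i
  proof -
    obtain j where "j < d \<and> b (i,j) = 0" using b il unfolding BB_def by auto
    then have "\<exists>j. j < d \<and> b (i,j) = 0" by blast
    then have "(SOME j. j < d \<and> b (i,j) = 0) < d \<and> b (i, SOME j. j < d \<and> b (i,j) = 0) = 0"
      by (rule someI_ex)
    then show ?thesis unfolding z_def using il by simp
  qed
  have zZ: "z \<in> ZZ l d" unfolding ZZ_def using zi by (auto simp: z_def split: if_splits)
  have out: "b x = 0" if "x \<notin> GG l d - Zp l z" for x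
  proof (cases "x \<in> GG l d")
    case True
    then have "x \<in> Zp l z" using that by auto
    then show ?thesis using zi unfolding Zp_def by auto
  next
    case False then show ?thesis using b unfolding BB_def mem_Collect_eq by blast
  qed
  have "sum b (GG l d - Zp l z) = sum b (GG l d)"
    by (rule sum.mono_neutral_left) (auto simp: out)
  moreover have "sum b (GG l d) = K" using b unfolding BB_def by blast
  ultimately have "b \<in> cmp (GG l d - Zp l z) K" using out unfolding cmp_def by simp
  then show "b \<in> (\<Union>z\<in>ZZ l d. cmp (GG l d - Zp l z) K)" using zZ by blast
qed

lemma BB_upper:
  assumes "l * (d - 1) \<ge> 1"
  shows "card (BB l d K) \<le> d ^ l * ((K + l * (d - 1) - 1) choose K)"
proof -
  have "card (BB l d K) \<le> card (\<Union>z\<in>ZZ l d. cmp (GG l d - Zp l z) K)"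
    by (rule card_mono) (auto intro!: finite_UN_I finite_ZZ cmp_finite simp: BB_sub_union)
  also have "\<dots> \<le> (\<Sum>z\<in>ZZ l d. card (cmp (GG l d - Zp l z) K))"
    by (rule card_UN_le[OF finite_ZZ])
  also have "\<dots> = (\<Sum>z\<in>ZZ l d. (K + l * (d - 1) - 1) choose K)"
  proof (rule sum.cong)
    fix z assume z: "z \<in> ZZ l d"
    have ne: "GG l d - Zp l z \<noteq> {}"
    proof
      assume "GG l d - Zp l z = {}"
      then have "card (GG l d - Zp l z) = 0" by simp
      then show False using card_Pz[OF z] assms by simp
    qed
    show "card (cmp (GG l d - Zp l z) K) = (K + l * (d - 1) - 1) choose K"
      using cmp_card[OF _ ne] card_Pz[OF z] by simp
  qed simp
  also have "\<dots> = d ^ l * ((K + l * (d - 1) - 1) choose K)" by (simp add: card_ZZ)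
  finally show ?thesis .
qed

definition shiftf :: "(nat \<times> nat) set \<Rightarrow> (nat \<times> nat \<Rightarrow> nat) \<Rightarrow> (nat \<times> nat \<Rightarrow> nat)" where
  "shiftf P g = (\<lambda>x. g x + (if x \<in> P then 1 else 0))"

lemma BB_lower:
  assumes "l * (d - 1) \<ge> 1" and "K \<ge> l * (d - 1)"
  shows "d ^ l * ((K - 1) choose (K - l * (d - 1))) \<le> card (BB l d K)"
proof -
  define p where "p = l * (d - 1)"
  define D where "D z = shiftf (GG l d - Zp l z) ` cmp (GG l d - Zp l z) (K - p)" for z
  have injs: "inj (shiftf P)" for P
  proof (rule injI)
    fix g h assume "shiftf P g = shiftf P h"
    then have "g x = h x" for x unfolding shiftf_def by (metis add_right_cancel)
    then show "g = h" by auto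
  qed
  have cardD: "card (D z) = (K - 1) choose (K - p)" if z: "z \<in> ZZ l d" for z
  proof -
    have ne: "GG l d - Zp l z \<noteq> {}"
    proof
      assume "GG l d - Zp l z = {}"
      then have "card (GG l d - Zp l z) = 0" by simp
      then show False using card_Pz[OF z] assms by simp
    qed
    have "card (D z) = card (cmp (GG l d - Zp l z) (K - p))"
      unfolding D_def by (rule card_image) (rule inj_on_subset[OF injs], simp)
    also have "\<dots> = (K - p + p - 1) choose (K - p)"
      using cmp_card[OF _ ne] card_Pz[OF z] by (simp add: p_def)
    finally show ?thesis using assms by (simp add: p_def)
  qed
  have Dsub: "D z \<subseteq> BB l d K" if z: "z \<in> ZZ l d" for z
  proof
    fix b assume "b \<in> D z"
    then obtain g where g: "g \<in> cmp (GG l d - Zp l z) (K - p)" and bg: "b = shiftf (GG l d - Zp l z) g"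
      unfolding D_def by auto
    have g0: "g x = 0" if "x \<notin> GG l d - Zp l z" for x using g that unfolding cmp_def by blast
    have "\<forall>x. x \<notin> GG l d \<longrightarrow> b x = 0" using g0 by (auto simp: bg shiftf_def)
    moreover have "\<forall>i<l. \<exists>j<d. b (i,j) = 0"
    proof (intro allI impI)
      fix i assume i: "i < l"
      have "z i < d" using z i unfolding ZZ_def by auto
      moreover have "(i, z i) \<in> Zp l z" using i unfolding Zp_def by auto
      ultimately show "\<exists>j<d. b (i,j) = 0" using g0 by (auto simp: bg shiftf_def)
    qed
    moreover have "sum b (GG l d) = K"
    proof -
      have "sum b (GG l d) = sum g (GG l d) + card (GG l d - Zp l z)"
        unfolding bg shiftf_def by (simp add: sum.distrib Int_absorb1 sum.If_cases Diff_eq Compl_eq)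
      also have "sum g (GG l d) = sum g (GG l d - Zp l z)"
        by (rule sum.mono_neutral_right) (auto simp: g0)
      also have "\<dots> = K - p" using g unfolding cmp_def by auto
      finally show ?thesis using card_Pz[OF z] assms by (simp add: p_def)
    qed
    ultimately show "b \<in> BB l d K" unfolding BB_def by auto
  qed
  have disj: "D z \<inter> D z' = {}" if z: "z \<in> ZZ l d" and z': "z' \<in> ZZ l d" and ne: "z \<noteq> z'" for z z'
  proof (rule ccontr)
    assume "D z \<inter> D z' \<noteq> {}"
    then obtain b where b1: "b \<in> D z" and b2: "b \<in> D z'" by auto
    obtain i where i: "i < l" "z i \<noteq> z' i"
    proof -
      have "\<not> (\<forall>i\<in>{..<l}. z i = z' i)" using PiE_ext[of z "{..<l}" "\<lambda>_. {..<d}" z'] z z' ne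
        unfolding ZZ_def by blast
      then show ?thesis using that by blast
    qed
    obtain g where g: "g \<in> cmp (GG l d - Zp l z) (K - p)" and bg: "b = shiftf (GG l d - Zp l z) g"
      using b1 unfolding D_def by auto
    obtain g' where g': "g' \<in> cmp (GG l d - Zp l z') (K - p)" and bg': "b = shiftf (GG l d - Zp l z') g'"
      using b2 unfolding D_def by auto
    have zi: "z' i < d" using z' i unfolding ZZ_def by auto
    have in1: "(i, z' i) \<in> GG l d - Zp l z" using i zi unfolding GG_def Zp_def by auto
    have in2: "(i, z' i) \<notin> GG l d - Zp l z'" using i unfolding Zp_def by auto
    have "b (i, z' i) \<ge> 1" using in1 by (simp add: bg shiftf_def)
    moreover have "b (i, z' i) = 0" using in2 g' unfolding bg' shiftf_def cmp_def by auto
    ultimately show False by simp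
  qed
  have finD: "\<forall>z\<in>ZZ l d. finite (D z)" by (simp add: D_def cmp_finite)
  have disjD: "\<forall>z\<in>ZZ l d. \<forall>z'\<in>ZZ l d. z \<noteq> z' \<longrightarrow> D z \<inter> D z' = {}" using disj by blast
  have "d ^ l * ((K - 1) choose (K - p)) = (\<Sum>z\<in>ZZ l d. card (D z))"
    using cardD by (simp add: card_ZZ)
  also have "\<dots> = card (\<Union>z\<in>ZZ l d. D z)"
    by (rule card_UN_disjoint[OF finite_ZZ finD disjD, symmetric])
  also have "\<dots> \<le> card (BB l d K)"
    by (rule card_mono[OF BB_finite]) (use Dsub in blast)
  finally show ?thesis by (simp add: p_def)
qed




definition mn :: "nat \<Rightarrow> (nat \<Rightarrow> nat \<Rightarrow> int) \<Rightarrow> nat \<Rightarrow> int" where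
  "mn d a i = Min ((\<lambda>j. a i j) ` {..<d})"
definition ph :: "nat \<Rightarrow> nat \<Rightarrow> (nat \<Rightarrow> nat \<Rightarrow> int) \<Rightarrow> int" where
  "ph l d a = (\<Sum>i<l. mn d a i)"
definition dg :: "nat \<Rightarrow> nat \<Rightarrow> (nat \<Rightarrow> nat \<Rightarrow> int) \<Rightarrow> int" where
  "dg l d a = (\<Sum>i<l. \<Sum>j<d. a i j)"
definition nrm :: "nat \<Rightarrow> nat \<Rightarrow> (nat \<Rightarrow> nat \<Rightarrow> int) \<Rightarrow> (nat \<times> nat \<Rightarrow> nat)" where
  "nrm l d a = (\<lambda>(i,j). if i < l \<and> j < d then nat (a i j - mn d a i) else 0)"

lemma phiM_eq: "phiM l d u = ph l d (rep u)"
  unfolding phiM_def ph_def mn_def ..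
lemma degM_eq: "degM l d u = dg l d (rep u)"
  unfolding degM_def dg_def ..

lemma mn_le: "0 < d \<Longrightarrow> j < d \<Longrightarrow> mn d a i \<le> a i j"
  unfolding mn_def by (rule Min_le) auto

lemma mn_in: assumes "0 < d" shows "\<exists>j<d. a i j = mn d a i"
proof -
  from assms have "Min ((\<lambda>j. a i j) ` {..<d}) \<in> (\<lambda>j. a i j) ` {..<d}" by (intro Min_in) auto
  then show ?thesis unfolding mn_def by auto
qed

lemma MrelI:
  assumes "a \<in> Zld l d" "b \<in> Zld l d" "(\<Sum>i<l. c i) = 0" "\<And>i j. i < l \<Longrightarrow> j < d \<Longrightarrow> a i j - b i j = c i"
  shows "(a, b) \<in> Mrel l d"
  unfolding Mrel_def using assms by blast

lemma MrelE:
  assumes "(a, b) \<in> Mrel l d"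
  obtains c where "a \<in> Zld l d" "b \<in> Zld l d" "(\<Sum>i<l. c i) = 0" "\<And>i j. i < l \<Longrightarrow> j < d \<Longrightarrow> a i j - b i j = c i"
proof -
  from assms have "a \<in> Zld l d \<and> b \<in> Zld l d \<and> (\<exists>c :: nat \<Rightarrow> int. (\<Sum>i<l. c i) = 0 \<and> (\<forall>i<l. \<forall>j<d. a i j - b i j = c i))"
    unfolding Mrel_def by simp
  then obtain c :: "nat \<Rightarrow> int" where "a \<in> Zld l d" "b \<in> Zld l d" "(\<Sum>i<l. c i) = 0" "\<forall>i<l. \<forall>j<d. a i j - b i j = c i"
    by blast
  then show thesis using that by blast
qed

lemma equiv_M: "equiv (Zld l d) (Mrel l d)"
proof (rule equivI)
  show "Mrel l d \<subseteq> Zld l d \<times> Zld l d" by (auto elim: MrelE)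
  show "refl_on (Zld l d) (Mrel l d)"
  proof (rule refl_onI)
    fix a assume a: "a \<in> Zld l d"
    show "(a, a) \<in> Mrel l d" by (rule MrelI[where c="\<lambda>_. 0"]) (use a in auto)
  qed
  show "sym (Mrel l d)"
  proof (rule symI)
    fix a b assume "(a, b) \<in> Mrel l d"
    then obtain c where c: "a \<in> Zld l d" "b \<in> Zld l d" "(\<Sum>i<l. c i) = 0" "\<And>i j. i < l \<Longrightarrow> j < d \<Longrightarrow> a i j - b i j = c i"
      by (elim MrelE) blast
    show "(b, a) \<in> Mrel l d"
    proof (rule MrelI[where c="\<lambda>i. - c i"])
      show "(\<Sum>i<l. - c i) = 0" using c(3) by (simp add: sum_negf)
      fix i j assume "i < l" "j < d"
      then have "a i j - b i j = c i" by (rule c(4))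
      then show "b i j - a i j = - c i" by linarith
    qed (use c in auto)
  qed
  show "trans (Mrel l d)"
  proof (rule transI)
    fix a b e assume ab: "(a, b) \<in> Mrel l d" and be: "(b, e) \<in> Mrel l d"
    obtain c where c: "a \<in> Zld l d" "b \<in> Zld l d" "(\<Sum>i<l. c i) = 0" "\<And>i j. i < l \<Longrightarrow> j < d \<Longrightarrow> a i j - b i j = c i"
      using ab by (elim MrelE) blast
    obtain c' where c': "b \<in> Zld l d" "e \<in> Zld l d" "(\<Sum>i<l. c' i) = 0" "\<And>i j. i < l \<Longrightarrow> j < d \<Longrightarrow> b i j - e i j = c' i"
      using be by (elim MrelE) blast
    show "(a, e) \<in> Mrel l d"
    proof (rule MrelI[where c="\<lambda>i. c i + c' i"])
      show "(\<Sum>i<l. c i + c' i) = 0" using c(3) c'(3) by (simp add: sum.distrib)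
      fix i j assume "i < l" "j < d"
      then have "a i j - b i j = c i" "b i j - e i j = c' i" by (auto intro: c(4) c'(4))
      then show "a i j - e i j = c i + c' i" by linarith
    qed (use c c' in auto)
  qed
qed

lemma rep_props:
  assumes "u \<in> Mlat l d"
  shows "rep u \<in> u" "rep u \<in> Zld l d" "u = Mrel l d `` {rep u}"
proof -
  obtain a where a: "a \<in> Zld l d" "u = Mrel l d `` {a}" using assms unfolding Mlat_def by (auto elim: quotientE)
  have "a \<in> u" using a(2) equiv_class_self[OF equiv_M a(1)] by simp
  then show ru: "rep u \<in> u" unfolding rep_def by (rule someI[of "\<lambda>a. a \<in> u"])
  then have ar: "(a, rep u) \<in> Mrel l d" using a by simp
  then show "rep u \<in> Zld l d" unfolding Mrel_def by auto
  show "u = Mrel l d `` {rep u}" using a(2) equiv_class_eq[OF equiv_M ar] by simp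
qed

lemma rel_rep: "u \<in> Mlat l d \<Longrightarrow> a \<in> u \<Longrightarrow> (a, rep u) \<in> Mrel l d"
  using in_quotient_imp_in_rel[OF equiv_M, where X=u and x=a and y="rep u"] rep_props(1)[of u l d]
  unfolding Mlat_def by auto

lemma rel_inv:
  assumes "(a, b) \<in> Mrel l d" "0 < d"
  shows "dg l d a = dg l d b" "ph l d a = ph l d b" "nrm l d a = nrm l d b"
proof -
  obtain c where c: "(\<Sum>i<l. c i) = 0" "\<forall>i<l. \<forall>j<d. a i j = b i j + c i"
    using assms(1) unfolding Mrel_def by (auto simp: algebra_simps)
  have mnc: "mn d a i = mn d b i + c i" if i: "i < l" for i
  proof -
    have "(\<lambda>j. a i j) ` {..<d} = (\<lambda>x. x + c i) ` ((\<lambda>j. b i j) ` {..<d})"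
      using c(2) i by (auto simp: image_image)
    moreover have "(\<lambda>x. x + c i) (Min ((\<lambda>j. b i j) ` {..<d})) = Min ((\<lambda>x. x + c i) ` ((\<lambda>j. b i j) ` {..<d}))"
      using assms(2) by (intro mono_Min_commute) (auto simp: mono_def)
    ultimately show ?thesis unfolding mn_def by simp
  qed
  have "dg l d a = (\<Sum>i<l. \<Sum>j<d. b i j + c i)" unfolding dg_def using c(2) by simp
  also have "\<dots> = dg l d b + of_nat d * (\<Sum>i<l. c i)"
    by (simp add: dg_def sum.distrib sum_distrib_left)
  finally show "dg l d a = dg l d b" using c(1) by simp
  have "ph l d a = (\<Sum>i<l. mn d b i + c i)" unfolding ph_def using mnc by simp
  then show "ph l d a = ph l d b" using c(1) by (simp add: ph_def sum.distrib)
  show "nrm l d a = nrm l d b"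
    unfolding nrm_def using mnc c(2) by (auto simp: fun_eq_iff)
qed

lemma in_cone_iff:
  assumes "0 < l" "0 < d"
  shows "in_cone l d a \<longleftrightarrow> ph l d a \<ge> 0"
proof
  assume "in_cone l d a"
  then obtain c :: "nat \<Rightarrow> real" where c: "(\<Sum>i<l. c i) = 0" "\<forall>i<l. \<forall>j<d. real_of_int (a i j) + c i \<ge> 0"
    unfolding in_cone_def by auto
  have "real_of_int (mn d a i) + c i \<ge> 0" if "i < l" for i
    using mn_in[OF assms(2), of a i] c(2) that by metis
  then have "(\<Sum>i<l. real_of_int (mn d a i) + c i) \<ge> 0" by (intro sum_nonneg) auto
  then have "real_of_int (ph l d a) \<ge> 0" using c(1) by (simp add: ph_def sum.distrib)
  then show "ph l d a \<ge> 0" by simp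
next
  assume h: "ph l d a \<ge> 0"
  define c where "c i = - real_of_int (mn d a i) + real_of_int (ph l d a) / real l" for i
  have "(\<Sum>i<l. c i) = - (\<Sum>i<l. real_of_int (mn d a i)) + real l * (real_of_int (ph l d a) / real l)"
    unfolding c_def by (simp only: sum.distrib sum_negf sum_constant card_lessThan)
  also have "\<dots> = 0" using assms(1) by (simp add: ph_def)
  finally have "(\<Sum>i<l. c i) = 0" .
  moreover have "\<forall>i<l. \<forall>j<d. real_of_int (a i j) + c i \<ge> 0"
  proof (intro allI impI)
    fix i j assume "i < l" "j < d"
    then have "mn d a i \<le> a i j" using mn_le assms by auto
    moreover have "real_of_int (ph l d a) / real l \<ge> 0" using h by simp
    ultimately show "real_of_int (a i j) + c i \<ge> 0" unfolding c_def by linarith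
  qed
  ultimately show "in_cone l d a" unfolding in_cone_def by blast
qed

lemma sigma_iff:
  assumes "0 < l" "0 < d"
  shows "u \<in> sigma_dual_M l d \<longleftrightarrow> u \<in> Mlat l d \<and> ph l d (rep u) \<ge> 0"
proof
  assume "u \<in> sigma_dual_M l d"
  then obtain a where u: "u \<in> Mlat l d" and a: "a \<in> u" "in_cone l d a" unfolding sigma_dual_M_def by auto
  have "ph l d a = ph l d (rep u)" using rel_inv(2)[OF rel_rep[OF u a(1)] assms(2)] .
  then show "u \<in> Mlat l d \<and> ph l d (rep u) \<ge> 0" using u a in_cone_iff[OF assms] by simp
next
  assume "u \<in> Mlat l d \<and> ph l d (rep u) \<ge> 0"
  then show "u \<in> sigma_dual_M l d" unfolding sigma_dual_M_def
    using rep_props(1) in_cone_iff[OF assms] by blast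
qed

lemma dg_ge: "0 < d \<Longrightarrow> dg l d a \<ge> int d * ph l d a"
proof -
  assume d: "0 < d"
  have "(\<Sum>j<d. a i j) \<ge> int d * mn d a i" for i
  proof -
    have "(\<Sum>j<d. mn d a i) \<le> (\<Sum>j<d. a i j)" using mn_le[OF d] by (intro sum_mono) auto
    then show ?thesis by simp
  qed
  then have "(\<Sum>i<l. int d * mn d a i) \<le> dg l d a" unfolding dg_def by (intro sum_mono) auto
  then show ?thesis by (simp add: ph_def sum_distrib_left)
qed




lemma sum_nrm:
  assumes "0 < d"
  shows "int (sum (nrm l d a) (GG l d)) = dg l d a - int d * ph l d a"
proof -
  have "int (sum (nrm l d a) (GG l d)) = (\<Sum>x\<in>{..<l} \<times> {..<d}. int (nrm l d a x))"
    unfolding GG_def by (simp add: of_nat_sum)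
  also have "\<dots> = (\<Sum>i<l. \<Sum>j<d. int (nrm l d a (i,j)))"
    by (simp add: sum.cartesian_product)
  also have "\<dots> = (\<Sum>i<l. \<Sum>j<d. a i j - mn d a i)"
  proof (intro sum.cong refl)
    fix i j assume "i \<in> {..<l}" "j \<in> {..<d}"
    then show "int (nrm l d a (i,j)) = a i j - mn d a i"
      using mn_le[OF assms, of j a i] by (simp add: nrm_def)
  qed
  also have "\<dots> = dg l d a - int d * ph l d a"
    by (simp add: sum_subtractf dg_def ph_def sum_distrib_left)
  finally show ?thesis .
qed

lemma nrm_G: "x \<notin> GG l d \<Longrightarrow> nrm l d a x = 0"
  unfolding nrm_def GG_def by (cases x) auto

context
  fixes l d N m :: nat
  assumes l: "0 < l" and d: "0 < d" and m: "m \<le> (l - 1) * N"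
begin

definition SS where
  "SS = {u \<in> sigma_dual_M l d. phiM l d u = int m \<and> degM l d u = int (N * d * (l - 1))}"

definition KK where "KK = d * (N * (l - 1) - m)"

lemma KK_eq: "int KK + int d * int m = int (N * d * (l - 1))"
proof -
  have h: "N * (l - 1) - m + m = N * (l - 1)" using m by (simp add: mult.commute)
  have "KK + d * m = d * (N * (l - 1) - m + m)" unfolding KK_def by (simp add: add_mult_distrib2)
  also have "\<dots> = N * d * (l - 1)" using h by simp
  finally have "KK + d * m = N * d * (l - 1)" .
  then have "int (KK + d * m) = int (N * d * (l - 1))" by simp
  then show ?thesis by simp
qed

lemma F_maps: "u \<in> SS \<Longrightarrow> nrm l d (rep u) \<in> BB l d KK"
proof -
  assume u: "u \<in> SS"
  then have uM: "u \<in> Mlat l d" and ph: "ph l d (rep u) = int m" and dg: "dg l d (rep u) = int (N * d * (l - 1))"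
    unfolding SS_def using sigma_iff[OF l d] by (auto simp: phiM_eq degM_eq)
  let ?a = "rep u"
  have "\<forall>x. x \<notin> GG l d \<longrightarrow> nrm l d ?a x = 0" using nrm_G by blast
  moreover have "\<forall>i<l. \<exists>j<d. nrm l d ?a (i,j) = 0"
  proof (intro allI impI)
    fix i assume i: "i < l"
    obtain j where j: "j < d" "?a i j = mn d ?a i" using mn_in[OF d] by blast
    then have "nrm l d ?a (i,j) = 0" using i by (simp add: nrm_def)
    then show "\<exists>j<d. nrm l d ?a (i,j) = 0" using j by blast
  qed
  moreover have "sum (nrm l d ?a) (GG l d) = KK"
  proof -
    have "int (sum (nrm l d ?a) (GG l d)) = int (N * d * (l - 1)) - int d * int m"
      using sum_nrm[OF d] ph dg by simp
    also have "\<dots> = int KK" using KK_eq by linarith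
    finally show ?thesis by (simp only: of_nat_eq_iff)
  qed
  ultimately show ?thesis unfolding BB_def by blast
qed

lemma F_inj: "inj_on (\<lambda>u. nrm l d (rep u)) SS"
proof (rule inj_onI)
  fix u v assume u: "u \<in> SS" and v: "v \<in> SS" and eq: "nrm l d (rep u) = nrm l d (rep v)"
  from u have uM: "u \<in> Mlat l d" and phu: "ph l d (rep u) = int m"
    unfolding SS_def using sigma_iff[OF l d] by (auto simp: phiM_eq)
  from v have vM: "v \<in> Mlat l d" and phv: "ph l d (rep v) = int m"
    unfolding SS_def using sigma_iff[OF l d] by (auto simp: phiM_eq)
  let ?a = "rep u" and ?b = "rep v"
  have "(?a, ?b) \<in> Mrel l d"
  proof (rule MrelI[where c="\<lambda>i. mn d ?a i - mn d ?b i"])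
    show "?a \<in> Zld l d" by (rule rep_props(2)[OF uM])
    show "?b \<in> Zld l d" by (rule rep_props(2)[OF vM])
    show "(\<Sum>i<l. mn d ?a i - mn d ?b i) = 0"
      using phu phv by (simp add: sum_subtractf ph_def)
    fix i j assume i: "i < l" and j: "j < d"
    have "nrm l d ?a (i,j) = nrm l d ?b (i,j)" using eq by simp
    then have "nat (?a i j - mn d ?a i) = nat (?b i j - mn d ?b i)" using i j by (simp add: nrm_def)
    moreover have "?a i j - mn d ?a i \<ge> 0" "?b i j - mn d ?b i \<ge> 0" using mn_le[OF d j] by auto
    ultimately have "?a i j - mn d ?a i = ?b i j - mn d ?b i" by simp
    then show "?a i j - ?b i j = mn d ?a i - mn d ?b i" by linarith
  qed
  then have "Mrel l d `` {?a} = Mrel l d `` {?b}" by (rule equiv_class_eq[OF equiv_M])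
  then show "u = v" using rep_props(3)[OF uM] rep_props(3)[OF vM] by simp
qed

lemma F_onto: "b \<in> BB l d KK \<Longrightarrow> \<exists>u\<in>SS. nrm l d (rep u) = b"
proof -
  assume b: "b \<in> BB l d KK"
  have b0: "b x = 0" if "x \<notin> GG l d" for x using b that unfolding BB_def mem_Collect_eq by blast
  have brow: "\<exists>j<d. b (i,j) = 0" if "i < l" for i using b that unfolding BB_def mem_Collect_eq by blast
  have bsum: "sum b (GG l d) = KK" using b unfolding BB_def mem_Collect_eq by blast
  define s :: "nat \<Rightarrow> int" where "s i = (if i = 0 then int m else 0)" for i
  define a where "a i j = (if i < l \<and> j < d then int (b (i,j)) + s i else 0)" for i j
  have aZ: "a \<in> Zld l d" unfolding Zld_def a_def by auto
  have mna: "mn d a i = s i" if i: "i < l" for i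
    unfolding mn_def
  proof (rule Min_eqI)
    show "finite ((\<lambda>j. a i j) ` {..<d})" by simp
    show "\<And>y. y \<in> (\<lambda>j. a i j) ` {..<d} \<Longrightarrow> s i \<le> y" using i by (auto simp: a_def)
    obtain j where "j < d" "b (i,j) = 0" using brow[OF i] by blast
    then show "s i \<in> (\<lambda>j. a i j) ` {..<d}" using i by (auto simp: a_def intro!: image_eqI[of _ _ j])
  qed
  have pha: "ph l d a = int m"
  proof -
    have "ph l d a = (\<Sum>i<l. s i)" unfolding ph_def using mna by simp
    also have "\<dots> = int m" using l by (simp add: s_def)
    finally show ?thesis .
  qed
  have nrma: "nrm l d a = b"
  proof
    fix x show "nrm l d a x = b x"
    proof (cases "x \<in> GG l d")
      case True
      then obtain i j where x: "x = (i,j)" "i < l" "j < d" unfolding GG_def by auto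
      then show ?thesis using mna[OF x(2)] by (simp add: nrm_def a_def)
    next
      case False then show ?thesis using nrm_G b0 by simp
    qed
  qed
  have dga: "dg l d a = int (N * d * (l - 1))"
  proof -
    have "int KK = dg l d a - int d * int m" using sum_nrm[OF d, of l a] nrma pha bsum by simp
    then have "dg l d a = int KK + int d * int m" by simp
    also have "\<dots> = int (N * d * (l - 1))" using KK_eq by linarith
    finally show ?thesis .
  qed
  define u where "u = Mrel l d `` {a}"
  have uM: "u \<in> Mlat l d" unfolding u_def Mlat_def using aZ by (rule quotientI)
  have ar: "(a, rep u) \<in> Mrel l d" using rep_props(1)[OF uM] unfolding u_def by simp
  have "ph l d (rep u) = int m" "dg l d (rep u) = int (N * d * (l - 1))" "nrm l d (rep u) = b"
    using rel_inv[OF ar d] pha dga nrma by auto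
  then have "u \<in> SS \<and> nrm l d (rep u) = b"
    unfolding SS_def using sigma_iff[OF l d] uM by (simp add: phiM_eq degM_eq)
  then show ?thesis by blast
qed

lemma SS_image: "(\<lambda>u. nrm l d (rep u)) ` SS = BB l d KK"
  using F_maps F_onto by blast

lemma SS_card: "card SS = card (BB l d KK)" and SS_finite: "finite SS"
proof -
  show "card SS = card (BB l d KK)" using card_image[OF F_inj] SS_image by simp
  show "finite SS" using finite_image_iff[OF F_inj] SS_image BB_finite by simp
qed

end




lemma part2_bound:
  fixes l d N m :: nat
  assumes l2: "l \<ge> 2" and d2: "d \<ge> 2" and N1: "N \<ge> 1" and m: "m \<le> (l - 1) * N"
  shows "\<bar>real (card {u \<in> sigma_dual_M l d. phiM l d u = int m \<and> degM l d u = int (N * d * (l - 1))})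
              - real d ^ (l * d - 1) * real (N * (l - 1) - m) ^ (l * (d - 1) - 1)
                / fact (l * (d - 1) - 1)\<bar>
            \<le> real (d ^ l * (l * (d - 1)) * (d * (l - 1) + (l * (d - 1) - 1)) ^ (l * (d - 1) - 2)) * real N ^ (l * (d - 1) - 2)"
proof -
  have l: "0 < l" and d: "0 < d" using l2 d2 by auto
  define p where "p = l * (d - 1)"
  define e where "e = p - 1"
  have "2 * 1 \<le> l * (d - 1)" using l2 d2 by (intro mult_le_mono) auto
  then have p2: "p \<ge> 2" unfolding p_def by simp
  have p1: "1 \<le> l * (d - 1)" using p2 unfolding p_def by linarith
  have pe: "p = e + 1" and e1: "e \<ge> 1" using p2 unfolding e_def by auto
  define n where "n = N * (l - 1) - m"
  define K where "K = d * n"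
  have KK: "KK l d N m = K" unfolding KK_def[OF l d m] K_def n_def ..
  have SS: "SS l d N m = {u \<in> sigma_dual_M l d. phiM l d u = int m \<and> degM l d u = int (N * d * (l - 1))}"
    unfolding SS_def[OF l d m] ..
  have cardS: "card {u \<in> sigma_dual_M l d. phiM l d u = int m \<and> degM l d u = int (N * d * (l - 1))} = card (BB l d K)"
    using SS_card[OF l d m] SS KK by simp
  have up: "card (BB l d K) \<le> d ^ l * ((K + e) choose e)"
  proof -
    have "card (BB l d K) \<le> d ^ l * ((K + p - 1) choose K)"
      using BB_upper[OF p1, of K] unfolding p_def .
    also have "(K + p - 1) choose K = (K + e) choose e"
      using binomial_symmetric[of K "K + e"] pe by simp
    finally show ?thesis .
  qed
  have low: "d ^ l * ((K - 1) choose e) \<le> card (BB l d K)"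
  proof (cases "K \<ge> p")
    case True
    have "d ^ l * ((K - 1) choose (K - p)) \<le> card (BB l d K)"
      using BB_lower[OF p1, of K] True unfolding p_def by simp
    moreover have "(K - 1) choose (K - p) = (K - 1) choose e"
      using binomial_symmetric[of "K - p" "K - 1"] True pe by simp
    ultimately show ?thesis by simp
  next
    case False
    then have "K - 1 < e" using pe e1 by linarith
    then have z: "(K - 1) choose e = 0" by (rule binomial_eq_0)
    show ?thesis unfolding z by simp
  qed
  define L where "L = real ((K - 1) choose e)"
  define U where "U = real ((K + e) choose e)"
  define X where "X = real K ^ e / fact e"
  define Dl where "Dl = real d ^ l"
  define S where "S = real (card (BB l d K))"
  have LX: "L \<le> X" unfolding L_def X_def using bin_low[of K e] by (simp add: field_simps)
  have XU: "X \<le> U" unfolding U_def X_def using bin_up[of K e] by (simp add: field_simps)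
  have UL: "U \<le> L + real (e + 1) * real (K + e) ^ (e - 1)"
  proof -
    have "real ((K + e) choose e) \<le> real (((K - 1) choose e) + (e + 1) * (K + e) ^ (e - 1))"
      using bin_diff[OF e1, of K] by (simp only: of_nat_le_iff)
    then show ?thesis unfolding U_def L_def by (simp add: algebra_simps)
  qed
  have Dpos: "Dl \<ge> 0" unfolding Dl_def by simp
  have "real (card (BB l d K)) \<le> real (d ^ l * ((K + e) choose e))" using up by (simp only: of_nat_le_iff)
  then have SU: "S \<le> Dl * U" unfolding S_def Dl_def U_def by simp
  have "real (d ^ l * ((K - 1) choose e)) \<le> real (card (BB l d K))" using low by (simp only: of_nat_le_iff)
  then have LS: "Dl * L \<le> S" unfolding S_def Dl_def L_def by simp
  have T: "real d ^ (l * d - 1) * real n ^ e / fact e = Dl * X"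
  proof -
    have ld: "l * d - 1 = l + e" unfolding e_def p_def using p2 l2 d2
      by (simp add: p_def algebra_simps diff_mult_distrib2)
    have "real d ^ (l * d - 1) * real n ^ e = Dl * real K ^ e"
      unfolding ld Dl_def K_def by (simp add: power_add power_mult_distrib)
    then show ?thesis unfolding X_def by simp
  qed
  have absb: "\<bar>S - Dl * X\<bar> \<le> Dl * (real (e + 1) * real (K + e) ^ (e - 1))"
  proof -
    have "Dl * L \<le> Dl * X" "Dl * X \<le> Dl * U" using LX XU Dpos by (auto intro: mult_left_mono)
    moreover have "Dl * U \<le> Dl * L + Dl * (real (e + 1) * real (K + e) ^ (e - 1))"
      using mult_left_mono[OF UL Dpos] by (simp add: distrib_left)
    ultimately show ?thesis using SU LS by (simp add: abs_le_iff)
  qed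
  have Kb: "K + e \<le> (d * (l - 1) + e) * N"
  proof -
    have "n \<le> N * (l - 1)" unfolding n_def by simp
    then have "K \<le> d * (l - 1) * N" unfolding K_def by (simp add: mult.commute mult.left_commute)
    moreover have "e \<le> e * N" using N1 by simp
    ultimately have "K + e \<le> d * (l - 1) * N + e * N" by (rule add_mono)
    then show ?thesis by (simp add: add_mult_distrib)
  qed
  have powb: "real (K + e) ^ (e - 1) \<le> real (d * (l - 1) + e) ^ (e - 1) * real N ^ (e - 1)"
  proof -
    have "real (K + e) ^ (e - 1) \<le> real ((d * (l - 1) + e) * N) ^ (e - 1)"
    proof (rule power_mono)
      show "real (K + e) \<le> real ((d * (l - 1) + e) * N)" using Kb by (simp only: of_nat_le_iff)
    qed simp
    then show ?thesis by (simp add: power_mult_distrib)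
  qed
  have final: "\<bar>S - Dl * X\<bar> \<le> Dl * real (e + 1) * real (d * (l - 1) + e) ^ (e - 1) * real N ^ (e - 1)"
  proof -
    have "Dl * (real (e + 1) * real (K + e) ^ (e - 1)) \<le> Dl * (real (e + 1) * (real (d * (l - 1) + e) ^ (e - 1) * real N ^ (e - 1)))"
      using powb Dpos by (intro mult_left_mono) auto
    then show ?thesis using absb by (simp add: mult.assoc)
  qed
  have em: "e - 1 = l * (d - 1) - 2" and ee: "e = l * (d - 1) - 1" and ep: "e + 1 = l * (d - 1)"
    unfolding e_def p_def using p2 unfolding p_def by auto
  show ?thesis
    using final T cardS unfolding S_def Dl_def n_def em[symmetric] ee[symmetric] ep[symmetric]
    by (simp add: algebra_simps)
qed


theorem mainTheorem13:
  fixes l d :: nat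
  assumes "l \<ge> 2" and "d \<ge> 2"
  shows "(\<forall>N :: nat. \<forall>u \<in> sigma_dual_M l d.
            degM l d u = int (N * (l - 1) * d) \<longrightarrow>
              0 \<le> phiM l d u \<and> phiM l d u \<le> int ((l - 1) * N))
       \<and> (\<exists>C :: real. \<exists>N0 :: nat. \<forall>N \<ge> N0. \<forall>m :: nat. m \<le> (l - 1) * N \<longrightarrow>
            finite {u \<in> sigma_dual_M l d. phiM l d u = int m \<and> degM l d u = int (N * d * (l - 1))} \<and>
            \<bar>real (card {u \<in> sigma_dual_M l d. phiM l d u = int m \<and> degM l d u = int (N * d * (l - 1))})
              - real d ^ (l * d - 1) * real (N * (l - 1) - m) ^ (l * (d - 1) - 1)
                / fact (l * (d - 1) - 1)\<bar>
            \<le> C * real N ^ (l * (d - 1) - 2))"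
proof (intro conjI)
  have l: "0 < l" and d: "0 < d" using assms by auto
  show "\<forall>N :: nat. \<forall>u \<in> sigma_dual_M l d.
            degM l d u = int (N * (l - 1) * d) \<longrightarrow>
              0 \<le> phiM l d u \<and> phiM l d u \<le> int ((l - 1) * N)"
  proof (intro allI ballI impI)
    fix N u assume u: "u \<in> sigma_dual_M l d" and dgu: "degM l d u = int (N * (l - 1) * d)"
    have ph0: "ph l d (rep u) \<ge> 0" using u sigma_iff[OF l d] by blast
    have "int d * ph l d (rep u) \<le> dg l d (rep u)" by (rule dg_ge[OF d])
    also have "\<dots> = int d * int ((l - 1) * N)"
    proof -
      have c: "N * (l - 1) * d = d * ((l - 1) * N)" by (simp only: ac_simps)
      have "dg l d (rep u) = int (N * (l - 1) * d)" using dgu by (simp only: degM_eq)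
      also have "\<dots> = int d * int ((l - 1) * N)" unfolding c by (simp only: of_nat_mult)
      finally show ?thesis .
    qed
    finally have "ph l d (rep u) \<le> int ((l - 1) * N)" using d
      by (meson mult_left_le_imp_le of_nat_0_less_iff)
    then show "0 \<le> phiM l d u \<and> phiM l d u \<le> int ((l - 1) * N)" using ph0 by (simp add: phiM_eq)
  qed
  show "\<exists>C :: real. \<exists>N0 :: nat. \<forall>N \<ge> N0. \<forall>m :: nat. m \<le> (l - 1) * N \<longrightarrow>
            finite {u \<in> sigma_dual_M l d. phiM l d u = int m \<and> degM l d u = int (N * d * (l - 1))} \<and>
            \<bar>real (card {u \<in> sigma_dual_M l d. phiM l d u = int m \<and> degM l d u = int (N * d * (l - 1))})
              - real d ^ (l * d - 1) * real (N * (l - 1) - m) ^ (l * (d - 1) - 1)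
                / fact (l * (d - 1) - 1)\<bar>
            \<le> C * real N ^ (l * (d - 1) - 2)"
  proof (intro exI[of _ "real (d ^ l * (l * (d - 1)) * (d * (l - 1) + (l * (d - 1) - 1)) ^ (l * (d - 1) - 2))"]
      exI[of _ 1] allI impI conjI)
    fix N m :: nat assume N1: "1 \<le> N" and m: "m \<le> (l - 1) * N"
    show "finite {u \<in> sigma_dual_M l d. phiM l d u = int m \<and> degM l d u = int (N * d * (l - 1))}"
      using SS_finite[OF l d m] unfolding SS_def[OF l d m] .
    show "\<bar>real (card {u \<in> sigma_dual_M l d. phiM l d u = int m \<and> degM l d u = int (N * d * (l - 1))})
              - real d ^ (l * d - 1) * real (N * (l - 1) - m) ^ (l * (d - 1) - 1)
                / fact (l * (d - 1) - 1)\<bar>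
            \<le> real (d ^ l * (l * (d - 1)) * (d * (l - 1) + (l * (d - 1) - 1)) ^ (l * (d - 1) - 2)) * real N ^ (l * (d - 1) - 2)"
      by (rule part2_bound[OF assms N1 m])
  qed
qed

end
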